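(* Let $G$ be a connected graph with $n$ vertices, where $n$ is a multiple of $3$. If $G$ contains a cycle of length at least $4$, then $G$ is detachable.
   Context: A connected graph $G$ with $n$ vertices, $n$ a multiple of $3$, is detachable if its vertex set can be partitioned into two nonempty sets $V_1,V_2$ such that $|V_1|$ and $|V_2|$ are both multiples of $3$ and the induced subgraphs $G[V_1]$ and $G[V_2]$ are both connected (equivalently, there is an edge cut separating $G$ into two connected subgraphs whose sizes are multiples of $3$). *)

theory Defs
  imports Main
begin

definition simple_graph :: "'a set \<Rightarrow> ('a \<Rightarrow> 'a \<Rightarrow> bool) \<Rightarrow> bool" where
  "simple_graph V E \<longleftrightarrow> finite V \<and> (\<forall>x y. E x y \<longrightarrow> x \<in> V \<and> y \<in> V)
     \<and> (\<forall>x y. E x y \<longrightarrow> E y x) \<and> (\<forall>x. \<not> E x x)"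

definition induced_connected :: "('a \<Rightarrow> 'a \<Rightarrow> bool) \<Rightarrow> 'a set \<Rightarrow> bool" where
  "induced_connected E S \<longleftrightarrow> S \<noteq> {} \<and>
     (\<forall>x\<in>S. \<forall>y\<in>S. (\<lambda>u v. E u v \<and> u \<in> S \<and> v \<in> S)\<^sup>*\<^sup>* x y)"

definition is_cycle :: "'a set \<Rightarrow> ('a \<Rightarrow> 'a \<Rightarrow> bool) \<Rightarrow> 'a list \<Rightarrow> bool" where
  "is_cycle V E cs \<longleftrightarrow> length cs \<ge> 3 \<and> distinct cs \<and> set cs \<subseteq> V
     \<and> (\<forall>i. Suc i < length cs \<longrightarrow> E (cs ! i) (cs ! Suc i))
     \<and> E (last cs) (hd cs)"

definition detachable :: "'a set \<Rightarrow> ('a \<Rightarrow> 'a \<Rightarrow> bool) \<Rightarrow> bool" where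
  "detachable V E \<longleftrightarrow> (\<exists>V1 V2. V1 \<noteq> {} \<and> V2 \<noteq> {} \<and> V1 \<inter> V2 = {} \<and> V1 \<union> V2 = V
     \<and> 3 dvd card V1 \<and> 3 dvd card V2
     \<and> induced_connected E V1 \<and> induced_connected E V2)"

end

theory Submission
  imports Defs
begin

lemma ic_mono: "S \<subseteq> T \<Longrightarrow> (\<lambda>u v. E u v \<and> u \<in> S \<and> v \<in> S)\<^sup>*\<^sup>* x y \<Longrightarrow> (\<lambda>u v. E u v \<and> u \<in> T \<and> v \<in> T)\<^sup>*\<^sup>* x y"
  by (erule rtranclp_mono[THEN predicate2D, rotated]) auto

lemma ic_union:
  assumes sym: "\<forall>x y. E x y \<longrightarrow> E y x" and A: "induced_connected E A" and B: "induced_connected E B"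
    and ab: "a \<in> A" "b \<in> B" "E a b"
  shows "induced_connected E (A \<union> B)"
proof -
  let ?R = "\<lambda>u v. E u v \<and> u \<in> A \<union> B \<and> v \<in> A \<union> B"
  have pA: "?R\<^sup>*\<^sup>* x y" if "x \<in> A" "y \<in> A" for x y
    using A that unfolding induced_connected_def using ic_mono[of A "A \<union> B" E x y] by blast
  have pB: "?R\<^sup>*\<^sup>* x y" if "x \<in> B" "y \<in> B" for x y
    using B that unfolding induced_connected_def using ic_mono[of B "A \<union> B" E x y] by blast
  have e1: "?R a b" and e2: "?R b a" using ab sym by auto
  have "?R\<^sup>*\<^sup>* x y" if "x \<in> A \<union> B" "y \<in> A \<union> B" for x y
  proof -
    { assume "x \<in> A" "y \<in> B"
      then have ?thesis
        using rtranclp_trans[OF rtranclp.rtrancl_into_rtrancl[OF pA[of x a] e1] pB[of b y]] ab by blast }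
    moreover
    { assume "x \<in> B" "y \<in> A"
      then have ?thesis
        using rtranclp_trans[OF rtranclp.rtrancl_into_rtrancl[OF pB[of x b] e2] pA[of a y]] ab by blast }
    ultimately show ?thesis using that pA pB by blast
  qed
  then show ?thesis using ab unfolding induced_connected_def by auto
qed

lemma ic_single: "induced_connected E {x}"
  unfolding induced_connected_def by auto

lemma ic_path: "\<forall>x y. E x y \<longrightarrow> E y x \<Longrightarrow> xs \<noteq> [] \<Longrightarrow> \<forall>i. Suc i < length xs \<longrightarrow> E (xs!i) (xs!Suc i)
   \<Longrightarrow> induced_connected E (set xs)"
proof (induction xs)
  case Nil then show ?case by simp
next
  case (Cons x xs)
  show ?case
  proof (cases "xs = []")
    case True then show ?thesis by (simp add: ic_single)
  next
    case False
    have "\<forall>i. Suc i < length xs \<longrightarrow> E (xs!i) (xs!Suc i)"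
      using Cons.prems(3) by (metis Suc_mono length_Cons nth_Cons_Suc)
    then have ic: "induced_connected E (set xs)" using Cons False by blast
    have h2: "E x (xs!0)" using Cons.prems(3)[rule_format, of 0] False by simp
    have h1: "xs!0 \<in> set xs" using False by simp
    have "induced_connected E ({x} \<union> set xs)"
      by (rule ic_union[OF Cons.prems(1) ic_single[of E x] ic singletonI h1 h2])
    then show ?thesis by simp
  qed
qed

lemma cross: "r\<^sup>*\<^sup>* x y \<Longrightarrow> \<not> P x \<Longrightarrow> P y \<Longrightarrow> \<exists>u v. r u v \<and> \<not> P u \<and> P v"
  by (induction rule: rtranclp_induct) auto

lemma split3:
  assumes "induced_connected E S" "induced_connected E T" "S \<inter> T = {}" "S \<union> T = V" "finite V"
    "3 dvd card S" "3 dvd card V"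
  shows "detachable V E"
proof -
  have fS: "finite S" and fT: "finite T" using assms(4,5) by (auto intro: finite_subset)
  have cV: "card V = card S + card T" using card_Un_disjoint[OF fS fT assms(3)] assms(4) by simp
  have "3 dvd card T" using cV assms(6,7) dvd_add_right_iff[OF assms(6), of "card T"] by simp
  moreover have "S \<noteq> {}" "T \<noteq> {}" using assms(1,2) unfolding induced_connected_def by auto
  ultimately show ?thesis unfolding detachable_def using assms(1-4,6) by blast
qed

lemma grow:
  fixes B :: "nat \<Rightarrow> 'a set"
  assumes fin: "finite V" and sym: "\<forall>x y. E x y \<longrightarrow> E y x" and inV: "\<forall>x y. E x y \<longrightarrow> x \<in> V \<and> y \<in> V"
    and conV: "induced_connected E V"
  shows "(\<forall>i<4. B i \<subseteq> V \<and> induced_connected E (B i)) \<Longrightarrow> (\<forall>i<4. \<forall>j<4. i \<noteq> j \<longrightarrow> B i \<inter> B j = {})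
    \<Longrightarrow> \<exists>C. (\<forall>i<4. B i \<subseteq> C i \<and> induced_connected E (C i)) \<and> (\<forall>i<4. \<forall>j<4. i \<noteq> j \<longrightarrow> C i \<inter> C j = {})
       \<and> (\<Union>i<4. C i) = V"
proof (induction "card (V - (\<Union>i<(4::nat). B i))" arbitrary: B rule: less_induct)
  case less
  let ?U = "\<Union>i<(4::nat). B i"
  have UV: "?U \<subseteq> V" using less.prems by auto
  show ?case
  proof (cases "?U = V")
    case True
    then show ?thesis using less.prems by blast
  next
    case False
    then obtain y where y: "y \<in> V" "y \<notin> ?U" using UV by blast
    obtain x where x: "x \<in> B 0" using less.prems(1)[rule_format, of 0] unfolding induced_connected_def by auto
    have "(\<lambda>u v. E u v \<and> u \<in> V \<and> v \<in> V)\<^sup>*\<^sup>* y x"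
    proof -
      have "x \<in> V" using less.prems(1)[rule_format, of 0] x by auto
      then show ?thesis using conV y unfolding induced_connected_def by blast
    qed
    moreover have "x \<in> ?U" using x by auto
    ultimately have "\<exists>u v. (E u v \<and> u \<in> V \<and> v \<in> V) \<and> u \<notin> ?U \<and> v \<in> ?U"
      using cross[of _ y x "\<lambda>z. z \<in> ?U"] y by blast
    then obtain u v where uv: "E u v" "u \<in> V" "u \<notin> ?U" "v \<in> ?U" by blast
    then obtain i where i: "i < 4" "v \<in> B i" by auto
    define B' where "B' = B(i := insert u (B i))"
    have U': "(\<Union>j<(4::nat). B' j) = insert u ?U"
      unfolding B'_def using i by (auto split: if_splits)
    have lt: "card (V - (\<Union>j<(4::nat). B' j)) < card (V - ?U)"
    proof -
      have "V - insert u ?U = (V - ?U) - {u}" by blast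
      moreover have "u \<in> V - ?U" using uv by blast
      ultimately show ?thesis unfolding U' using fin by (metis card_Diff1_less finite_Diff)
    qed
    have symu: "E u v" using uv by blast
    have ic': "induced_connected E (insert u (B i))"
    proof -
      have icB: "induced_connected E (B i)" using less.prems(1) i by blast
      show ?thesis using ic_union[OF sym ic_single[of E u] icB singletonI i(2) symu] by simp
    qed
    have p1: "\<forall>j<4. B' j \<subseteq> V \<and> induced_connected E (B' j)"
      unfolding B'_def using less.prems(1) ic' uv(2) by simp
    have p2: "\<forall>j<4. \<forall>k<4. j \<noteq> k \<longrightarrow> B' j \<inter> B' k = {}"
    proof (intro allI impI)
      fix j k :: nat assume jk: "j < 4" "k < 4" "j \<noteq> k"
      have "u \<notin> B j" "u \<notin> B k" using uv(3) jk by auto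
      then show "B' j \<inter> B' k = {}" unfolding B'_def using less.prems(2) jk by auto
    qed
    obtain C where C: "(\<forall>j<4. B' j \<subseteq> C j \<and> induced_connected E (C j))"
       "(\<forall>j<4. \<forall>k<4. j \<noteq> k \<longrightarrow> C j \<inter> C k = {})" "(\<Union>j<4. C j) = V"
      using less.hyps[OF lt p1 p2] by blast
    have "\<forall>j<4. B j \<subseteq> B' j" unfolding B'_def by auto
    then show ?thesis using C by blast
  qed
qed


lemma quad:
  assumes sym: "\<forall>x y. E x y \<longrightarrow> E y x" and fin: "finite V" and d: "3 dvd card V"
    and c0: "induced_connected E C0" and c1: "induced_connected E C1"
    and c2: "induced_connected E C2" and c3: "induced_connected E C3"
    and d01: "C0 \<inter> C1 = {}" and d02: "C0 \<inter> C2 = {}" and d03: "C0 \<inter> C3 = {}"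
    and d12: "C1 \<inter> C2 = {}" and d13: "C1 \<inter> C3 = {}" and d23: "C2 \<inter> C3 = {}"
    and U: "C0 \<union> C1 \<union> C2 \<union> C3 = V"
    and e01: "E x0 x1" "x0 \<in> C0" "x1 \<in> C1"
    and e12: "E y1 y2" "y1 \<in> C1" "y2 \<in> C2"
    and e23: "E z2 z3" "z2 \<in> C2" "z3 \<in> C3"
    and e30: "E w3 w0" "w3 \<in> C3" "w0 \<in> C0"
  shows "detachable V E"
proof -
  have f: "finite C0" "finite C1" "finite C2" "finite C3" using fin U by auto
  have k01: "card (C0 \<union> C1) = card C0 + card C1" using f d01 by (simp add: card_Un_disjoint)
  have k12: "card (C1 \<union> C2) = card C1 + card C2" using f d12 by (simp add: card_Un_disjoint)
  have k012: "card (C0 \<union> C1 \<union> C2) = card C0 + card C1 + card C2"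
    using f d02 d12 k01 by (subst card_Un_disjoint) auto
  have kV: "card V = card C0 + card C1 + card C2 + card C3"
    using f d03 d13 d23 k012 U[symmetric] by (simp add: card_Un_disjoint Int_Un_distrib2)
  have i01: "induced_connected E (C0 \<union> C1)" by (rule ic_union[OF sym c0 c1 e01(2,3,1)])
  have i12: "induced_connected E (C1 \<union> C2)" by (rule ic_union[OF sym c1 c2 e12(2,3,1)])
  have i23: "induced_connected E (C2 \<union> C3)" by (rule ic_union[OF sym c2 c3 e23(2,3,1)])
  have i30: "induced_connected E (C3 \<union> C0)" by (rule ic_union[OF sym c3 c0 e30(2,3,1)])
  have i012: "induced_connected E (C0 \<union> C1 \<union> C2)" by (rule ic_union[OF sym i01 c2 _ e12(3,1)]) (use e12 in auto)
  have i123: "induced_connected E (C1 \<union> C2 \<union> C3)" by (rule ic_union[OF sym i12 c3 _ e23(3,1)]) (use e23 in auto)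
  have i230: "induced_connected E (C2 \<union> C3 \<union> C0)" by (rule ic_union[OF sym i23 c0 _ e30(3,1)]) (use e30 in auto)
  have i301: "induced_connected E (C3 \<union> C0 \<union> C1)" by (rule ic_union[OF sym i30 c1 _ e01(3,1)]) (use e01 in auto)
  consider "3 dvd card C0" | "3 dvd card C1" | "3 dvd card C2" | "3 dvd card C0 + card C1"
    | "3 dvd card C1 + card C2" | "3 dvd card C3"
  proof -
    have "\<And>a b c e::nat. 3 dvd a + b + c + e \<Longrightarrow> 3 dvd a \<or> 3 dvd b \<or> 3 dvd c \<or> 3 dvd a + b \<or> 3 dvd b + c \<or> 3 dvd e"
      by presburger
    then show "\<And>thesis. \<lbrakk>3 dvd card C0 \<Longrightarrow> thesis; 3 dvd card C1 \<Longrightarrow> thesis;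
      3 dvd card C2 \<Longrightarrow> thesis; 3 dvd card C0 + card C1 \<Longrightarrow> thesis;
      3 dvd card C1 + card C2 \<Longrightarrow> thesis; 3 dvd card C3 \<Longrightarrow> thesis\<rbrakk> \<Longrightarrow> thesis"
      using d kV by metis
  qed
  then show ?thesis
  proof cases
    case 1 show ?thesis by (rule split3[OF c0 i123 _ _ fin 1 d]) (use d01 d02 d03 U in auto)
  next
    case 2 show ?thesis by (rule split3[OF c1 i230 _ _ fin 2 d]) (use d01 d12 d13 U in auto)
  next
    case 3 show ?thesis by (rule split3[OF c2 i301 _ _ fin _ d]) (use d02 d12 d23 U 3 in auto)
  next
    case 4 show ?thesis by (rule split3[OF i01 i23 _ _ fin _ d]) (use d02 d03 d12 d13 U 4 k01 in auto)
  next
    case 5 show ?thesis by (rule split3[OF i12 i30 _ _ fin _ d]) (use d01 d02 d13 d23 U 5 k12 in auto)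
  next
    case 6 show ?thesis by (rule split3[OF c3 i012 _ _ fin 6 d]) (use d03 d13 d23 U in auto)
  qed
qed


theorem lemma7:
  fixes V :: "'a set" and E :: "'a \<Rightarrow> 'a \<Rightarrow> bool"
  assumes "simple_graph V E"
    and "induced_connected E V"
    and "3 dvd card V"
    and "\<exists>cs. is_cycle V E cs \<and> length cs \<ge> 4"
  shows "detachable V E"
proof -
  have fin: "finite V" and inV: "\<forall>x y. E x y \<longrightarrow> x \<in> V \<and> y \<in> V" and sym: "\<forall>x y. E x y \<longrightarrow> E y x"
    using assms(1) unfolding simple_graph_def by auto
  obtain cs where cyc: "is_cycle V E cs" and len: "length cs \<ge> 4" using assms(4) by blast
  obtain a b c rest where cs: "cs = a # b # c # rest" and rne: "rest \<noteq> []"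
  proof -
    have "Suc (Suc (Suc (Suc 0))) \<le> length cs" using len by simp
    then have "\<exists>a b c rest. cs = a # b # c # rest \<and> rest \<noteq> []"
      by (auto simp: Suc_le_length_iff)
    then show ?thesis using that by blast
  qed
  have dist: "distinct cs" and sub: "set cs \<subseteq> V"
    and step: "\<forall>i. Suc i < length cs \<longrightarrow> E (cs ! i) (cs ! Suc i)"
    and wrap: "E (last cs) (hd cs)" using cyc unfolding is_cycle_def by auto
  have eab: "E a b" using step[rule_format, of 0] cs by simp
  have ebc: "E b c" using step[rule_format, of 1] cs by simp
  have ecr: "E c (hd rest)" using step[rule_format, of 2] cs rne by (simp add: hd_conv_nth)
  have er: "\<forall>i. Suc i < length rest \<longrightarrow> E (rest ! i) (rest ! Suc i)"
  proof (intro allI impI)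
    fix i assume "Suc i < length rest"
    then show "E (rest ! i) (rest ! Suc i)" using step[rule_format, of "i+3"] cs by simp
  qed
  have era: "E (last rest) a" using wrap cs rne by simp
  have icr: "induced_connected E (set rest)" by (rule ic_path[OF sym rne er])
  define B :: "nat \<Rightarrow> 'a set" where
    "B = (\<lambda>i. if i = 0 then {a} else if i = 1 then {b} else if i = 2 then {c} else set rest)"
  have four: "{..<4::nat} = {0,1,2,3}" by auto
  have p1: "\<forall>i<4. B i \<subseteq> V \<and> induced_connected E (B i)"
    unfolding B_def using sub cs icr by (auto simp: ic_single)
  have p2: "\<forall>i<4. \<forall>j<4. i \<noteq> j \<longrightarrow> B i \<inter> B j = {}"
  proof (intro allI impI)
    fix i j :: nat assume "i < 4" "j < 4" "i \<noteq> j"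
    then have "i \<in> {0,1,2,3}" "j \<in> {0,1,2,3}" by auto
    then show "B i \<inter> B j = {}" unfolding B_def using dist cs \<open>i \<noteq> j\<close> by auto
  qed
  obtain C where C: "\<forall>i<4. B i \<subseteq> C i \<and> induced_connected E (C i)"
    "\<forall>i<4. \<forall>j<4. i \<noteq> j \<longrightarrow> C i \<inter> C j = {}" "(\<Union>i<4. C i) = V"
    using grow[OF fin sym inV assms(2) p1 p2] by blast
  have U: "C 0 \<union> C 1 \<union> C 2 \<union> C 3 = V" using C(3) unfolding four by auto
  have BC: "a \<in> C 0" "b \<in> C 1" "c \<in> C 2" "set rest \<subseteq> C 3"
    using C(1)[rule_format, of 0] C(1)[rule_format, of 1] C(1)[rule_format, of 2] C(1)[rule_format, of 3]
    unfolding B_def by auto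
  show ?thesis
  proof (rule quad[OF sym fin assms(3)])
    show "induced_connected E (C 0)" "induced_connected E (C 1)"
      "induced_connected E (C 2)" "induced_connected E (C 3)" using C(1) by auto
    show "C 0 \<inter> C 1 = {}" "C 0 \<inter> C 2 = {}" "C 0 \<inter> C 3 = {}"
      "C 1 \<inter> C 2 = {}" "C 1 \<inter> C 3 = {}" "C 2 \<inter> C 3 = {}" using C(2) by auto
    show "C 0 \<union> C 1 \<union> C 2 \<union> C 3 = V" by (rule U)
    show "E a b" "a \<in> C 0" "b \<in> C 1" using eab BC by auto
    show "E b c" "b \<in> C 1" "c \<in> C 2" using ebc BC by auto
    show "E c (hd rest)" "c \<in> C 2" "hd rest \<in> C 3" using ecr BC rne by auto
    show "E (last rest) a" "last rest \<in> C 3" "a \<in> C 0" using era BC rne by auto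
  qed
qed

end
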